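(* Let \[P=\{x\in[0,2]^2 : 2x_1+x_2\le 5,\ -2x_1+3x_2\le 3\}\subseteq\mathbb{R}^2,\] with both variables integer, and let \[P_L=\{(x,z)\in\mathbb{R}^2\times[0,1]^4 : x\in P,\ x_i=z_{i1}+2z_{i2}\text{ for } i=1,2\},\] where $z=(z_{11},z_{12},z_{21},z_{22})$ and all six variables of $P_L$ are integer variables. Then \[\operatorname{proj}_x\big(\mathrm{SC}(P_L)\big)\subsetneq \mathrm{SC}(P).\]
   Context: Split sets and split closure. For $(\pi,\pi_0)\in\mathbb{Z}^n\times\mathbb{Z}$, the split set is $S(\pi,\pi_0)=\{x\in\mathbb{R}^n:\pi_0<\pi^Tx<\pi_0+1\}$. Let $J\subseteq\{1,\dots,n\}$ be the index set of integer variables, and let $\mathcal{S}_n(J)$ be the family of split sets $S(\pi,\pi_0)$ with $\pi\in\mathbb{Z}^n$, $\pi_j=0$ for $j\notin J$, and $\pi_0\in\mathbb{Z}$. For $X\subseteq\mathbb{R}^n$, the split closure is $\mathrm{SC}(X,J)=\bigcap_{S\in\mathcal{S}_n(J)}\mathrm{conv}(X\setminus S)$. Here $\mathrm{SC}(P)$ means $\mathrm{SC}(P,\{1,2\})$, and $\mathrm{SC}(P_L)$ means the split closure of $P_L$ with all six coordinates integer. $\operatorname{proj}_x$ denotes orthogonal projection onto the $x$-coordinates. *)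

theory Defs
  imports "HOL-Analysis.Analysis"
begin

definition split_set :: "int ^ 'n \<Rightarrow> int \<Rightarrow> (real ^ 'n::finite) set" where
  "split_set \<pi> \<pi>0 = {x. real_of_int \<pi>0 < (\<Sum>i\<in>UNIV. real_of_int (\<pi> $ i) * x $ i)
                        \<and> (\<Sum>i\<in>UNIV. real_of_int (\<pi> $ i) * x $ i) < real_of_int \<pi>0 + 1}"

definition split_closure :: "(real ^ 'n::finite) set \<Rightarrow> 'n set \<Rightarrow> (real ^ 'n) set" where
  "split_closure X J = (\<Inter> {convex hull (X - split_set \<pi> \<pi>0) | \<pi> \<pi>0.
                              \<forall>j. j \<notin> J \<longrightarrow> \<pi> $ j = 0})"

definition P :: "(real ^ 2) set" where
  "P = {x. 0 \<le> x $ 1 \<and> x $ 1 \<le> 2 \<and> 0 \<le> x $ 2 \<and> x $ 2 \<le> 2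
          \<and> 2 * x $ 1 + x $ 2 \<le> 5 \<and> -2 * x $ 1 + 3 * x $ 2 \<le> 3}"

text \<open>The lifted polytope P_L in R^6, coordinates
  (x1,x2,z11,z12,z21,z22) = (y$1,y$2,y$3,y$4,y$5,y$6).\<close>
definition P_L :: "(real ^ 6) set" where
  "P_L = {y. (\<chi> i. if i = 1 then y $ 1 else y $ 2 :: real ^ 2) \<in> P
           \<and> (\<forall>k\<in>{3,4,5,6::6}. 0 \<le> y $ k \<and> y $ k \<le> 1)
           \<and> y $ 1 = y $ 3 + 2 * y $ 4
           \<and> y $ 2 = y $ 5 + 2 * y $ 6}"

definition proj_x :: "real ^ 6 \<Rightarrow> real ^ 2" where
  "proj_x y = (\<chi> i. if i = 1 then y $ 1 else y $ 2)"

end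

theory Submission
  imports Defs
begin

lemma exhaust_6:
  fixes x :: 6
  shows "x = 1 \<or> x = 2 \<or> x = 3 \<or> x = 4 \<or> x = 5 \<or> x = 6"
proof (induct x)
  case (of_int z)
  then have "z = 0 \<or> z = 1 \<or> z = 2 \<or> z = 3 \<or> z = 4 \<or> z = 5" by fastforce
  then show ?case by auto
qed

lemma UNIV_6: "UNIV = {1, 2, 3, 4, 5, 6::6}"
  using exhaust_6 by auto

lemma sum_6: "sum f (UNIV::6 set) = f 1 + f 2 + f 3 + f 4 + f 5 + f 6"
  unfolding UNIV_6 by (simp add: ac_simps)

definition vec2 :: "real \<Rightarrow> real \<Rightarrow> real^2" where
  "vec2 a b = (\<chi> i. if i = 1 then a else b)"

lemma vec2_nth [simp]: "vec2 a b $ 1 = a" "vec2 a b $ 2 = b"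
  by (simp_all add: vec2_def)

lemma split2: "(x::real^2) \<in> split_set \<pi> \<pi>0 \<longleftrightarrow>
   real_of_int \<pi>0 < of_int (\<pi>$1) * x$1 + of_int (\<pi>$2) * x$2 \<and>
   of_int (\<pi>$1) * x$1 + of_int (\<pi>$2) * x$2 < real_of_int \<pi>0 + 1"
  by (simp add: split_set_def sum_2)

lemma split2_int: "vec2 (of_int u / 6) (of_int w / 6) \<in> split_set \<pi> \<pi>0 \<longleftrightarrow>
   6 * \<pi>0 < \<pi>$1 * u + \<pi>$2 * w \<and> \<pi>$1 * u + \<pi>$2 * w < 6 * \<pi>0 + 6"
proof -
  have "real_of_int (\<pi>$1) * (of_int u / 6) + of_int (\<pi>$2) * (of_int w / 6)
        = of_int (\<pi>$1 * u + \<pi>$2 * w) / 6" (is "?l = ?r") by (simp add: field_simps)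
  have e: "vec2 (of_int u / 6) (of_int w / 6) \<in> split_set \<pi> \<pi>0 \<longleftrightarrow>
     real_of_int \<pi>0 < of_int (\<pi>$1 * u + \<pi>$2 * w) / 6 \<and> of_int (\<pi>$1 * u + \<pi>$2 * w) / 6 < real_of_int \<pi>0 + 1"
    unfolding split2 vec2_nth \<open>?l = ?r\<close> by (rule refl)
  have a: "real_of_int \<pi>0 < of_int k / 6 \<longleftrightarrow> 6 * \<pi>0 < k" for k
  proof -
    have "real_of_int \<pi>0 < of_int k / 6 \<longleftrightarrow> of_int (6 * \<pi>0) < (of_int k :: real)" by (simp add: field_simps)
    then show ?thesis by (simp only: of_int_less_iff)
  qed
  have b: "of_int k / 6 < real_of_int \<pi>0 + 1 \<longleftrightarrow> k < 6 * \<pi>0 + 6" for k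
  proof -
    have "of_int k / 6 < real_of_int \<pi>0 + 1 \<longleftrightarrow> (of_int k :: real) < of_int (6 * \<pi>0 + 6)" by (simp add: field_simps)
    then show ?thesis by (simp only: of_int_less_iff)
  qed
  show ?thesis by (simp only: e a b)
qed

lemma split6: "y \<in> split_set \<pi> \<pi>0 \<longleftrightarrow>
   real_of_int \<pi>0 < (\<Sum>i\<in>UNIV. real_of_int (\<pi> $ i) * y $ i) \<and>
   (\<Sum>i\<in>UNIV. real_of_int (\<pi> $ i) * y $ i) < real_of_int \<pi>0 + 1"
  by (simp add: split_set_def)

lemma linear_proj: "linear proj_x"
  by (rule linearI) (auto simp: proj_x_def vec_eq_iff)

lemma proj_nth [simp]: "proj_x y $ 1 = y $ 1" "proj_x y $ 2 = y $ 2"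
  by (simp_all add: proj_x_def)

lemma in_SC: "x \<in> split_closure X UNIV \<Longrightarrow> x \<in> convex hull (X - split_set \<pi> \<pi>0)"
  unfolding split_closure_def by blast

lemma part1: "proj_x ` split_closure P_L UNIV \<subseteq> split_closure P UNIV"
proof
  fix x assume "x \<in> proj_x ` split_closure P_L UNIV"
  then obtain y where y: "y \<in> split_closure P_L UNIV" and x: "x = proj_x y" by blast
  show "x \<in> split_closure P UNIV"
    unfolding split_closure_def
  proof (intro InterI, clarify)
    fix \<pi> :: "int^2" and \<pi>0 :: int
    define \<pi>' :: "int^6" where "\<pi>' = (\<chi> i. if i = 1 then \<pi>$1 else if i = 2 then \<pi>$2 else 0)"
    have "y \<in> convex hull (P_L - split_set \<pi>' \<pi>0)" using in_SC[OF y] .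
    then have "x \<in> proj_x ` (convex hull (P_L - split_set \<pi>' \<pi>0))" using x by blast
    also have "\<dots> = convex hull (proj_x ` (P_L - split_set \<pi>' \<pi>0))"
      by (rule convex_hull_linear_image[OF linear_proj])
    also have "\<dots> \<subseteq> convex hull (P - split_set \<pi> \<pi>0)"
    proof (rule hull_mono, clarify)
      fix z assume z: "z \<in> P_L" "z \<notin> split_set \<pi>' \<pi>0"
      have "proj_x z \<in> P" using z(1) unfolding P_L_def proj_x_def by simp
      moreover have "proj_x z \<notin> split_set \<pi> \<pi>0"
        using z(2) by (simp add: split2 split6 sum_6 \<pi>'_def)
      ultimately show "proj_x z \<in> P - split_set \<pi> \<pi>0" by blast
    qed
    finally show "x \<in> convex hull (P - split_set \<pi> \<pi>0)" .
  qed
qed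

lemma tri_hull:
  assumes "a \<in> X" "b \<in> X" "c \<in> X" "0 \<le> u" "0 \<le> v" "0 \<le> w" "u + v + w = 1"
    and "x = u *\<^sub>R a + v *\<^sub>R b + w *\<^sub>R c"
  shows "x \<in> convex hull X"
proof -
  have "x \<in> convex hull {a, b, c}" unfolding convex_hull_3 using assms by blast
  moreover have "convex hull {a, b, c} \<subseteq> convex hull X" using assms by (intro hull_mono) auto
  ultimately show ?thesis by blast
qed

abbreviation pt :: "int \<Rightarrow> int \<Rightarrow> real^2" where
  "pt u w \<equiv> vec2 (of_int u / 6) (of_int w / 6)"

lemma vec2_eq: "vec2 a b = vec2 c d \<longleftrightarrow> a = c \<and> b = d"
  by (auto simp: vec2_def vec_eq_iff forall_2)

lemma vec2_comb: "u *\<^sub>R vec2 a1 a2 + v *\<^sub>R vec2 b1 b2 + w *\<^sub>R vec2 c1 c2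
   = vec2 (u * a1 + v * b1 + w * c1) (u * a2 + v * b2 + w * c2)"
  by (auto simp: vec2_def vec_eq_iff forall_2)

lemma vec2_comb2: "u *\<^sub>R vec2 a1 a2 + v *\<^sub>R vec2 b1 b2
   = vec2 (u * a1 + v * b1) (u * a2 + v * b2)"
  by (auto simp: vec2_def vec_eq_iff forall_2)

lemma part2: "vec2 1 (4/3) \<in> split_closure P UNIV"
  unfolding split_closure_def
proof (intro InterI, clarify)
  fix \<pi> :: "int^2" and \<pi>0 :: int
  define p where "p = \<pi>$1"
  define q where "q = \<pi>$2"
  have xs: "vec2 1 (4/3) = pt 6 8" by (simp add: vec2_eq)
  have inP: "vec2 1 (4/3) \<in> P" by (simp add: P_def)
  have pts: "pt 6 6 \<in> P" "pt 6 10 \<in> P" "pt 0 6 \<in> P" "pt 12 6 \<in> P" "pt 9 12 \<in> P" "pt 10 10 \<in> P"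
    by (simp_all add: P_def)
  have S: "pt u w \<in> split_set \<pi> \<pi>0 \<longleftrightarrow> 6 * \<pi>0 < p * u + q * w \<and> p * u + q * w < 6 * \<pi>0 + 6" for u w
    unfolding split2_int p_def q_def ..
  show "vec2 1 (4/3) \<in> convex hull (P - split_set \<pi> \<pi>0)"
  proof (cases "vec2 1 (4/3) \<in> split_set \<pi> \<pi>0")
    case False
    then show ?thesis using inP by (intro hull_inc) blast
  next
    case True
    then have h: "6 * \<pi>0 < p * 6 + q * 8" "p * 6 + q * 8 < 6 * \<pi>0 + 6" unfolding xs S by auto
    have h1: "3 * \<pi>0 < 3 * p + 4 * q" "3 * p + 4 * q < 3 * \<pi>0 + 3" using h by linarith+
    then have h2: "3 * \<pi>0 + 1 \<le> 3 * p + 4 * q" "3 * p + 4 * q \<le> 3 * \<pi>0 + 2" by linarith+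
    have q0: "q \<noteq> 0"
    proof
      assume "q = 0"
      then have "\<pi>0 < p" "p < \<pi>0 + 1" using h1 by linarith+
      then show False by linarith
    qed
    have q1: "q = 1 \<longrightarrow> p = \<pi>0 - 1" using h2 by presburger
    have q2: "q = -1 \<longrightarrow> p = \<pi>0 + 2" using h2 by presburger
    consider "q \<ge> 2 \<or> q \<le> -2" 
      | "q = 1 \<and> p = \<pi>0 - 1 \<and> (\<pi>0 \<le> -1 \<or> \<pi>0 \<ge> 1) \<or> q = -1 \<and> p = \<pi>0 + 2 \<and> (\<pi>0 \<le> -2 \<or> \<pi>0 \<ge> 0)"
      | "q = 1 \<and> p = -1 \<and> \<pi>0 = 0 \<or> q = -1 \<and> p = 1 \<and> \<pi>0 = -1"
      using q0 q1 q2 by linarith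
    then show ?thesis
    proof cases
      case 1
      have "pt 6 6 \<notin> split_set \<pi> \<pi>0" "pt 6 10 \<notin> split_set \<pi> \<pi>0" unfolding S using h2 1 by linarith+
      then have m: "pt 6 6 \<in> P - split_set \<pi> \<pi>0" "pt 6 10 \<in> P - split_set \<pi> \<pi>0" using pts by blast+
      have e: "vec2 1 (4/3) = (1/2) *\<^sub>R pt 6 6 + (1/2) *\<^sub>R pt 6 10 + 0 *\<^sub>R pt 6 10"
        unfolding vec2_comb by (simp add: vec2_eq)
      show ?thesis by (rule tri_hull[OF m(1) m(2) m(2) _ _ _ _ e]) auto
    next
      case 2
      have n1: "pt 0 6 \<notin> split_set \<pi> \<pi>0" unfolding S using 2 by (elim disjE conjE; presburger)
      have n2: "pt 12 6 \<notin> split_set \<pi> \<pi>0" unfolding S using 2 by (elim disjE conjE; presburger)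
      have n3: "pt 9 12 \<notin> split_set \<pi> \<pi>0" unfolding S using 2 by (elim disjE conjE; presburger)
      have m: "pt 0 6 \<in> P - split_set \<pi> \<pi>0" "pt 12 6 \<in> P - split_set \<pi> \<pi>0" "pt 9 12 \<in> P - split_set \<pi> \<pi>0"
        using n1 n2 n3 pts by blast+
      have e: "vec2 1 (4/3) = (5/12) *\<^sub>R pt 0 6 + (1/4) *\<^sub>R pt 12 6 + (1/3) *\<^sub>R pt 9 12"
        unfolding vec2_comb by (simp add: vec2_eq)
      show ?thesis by (rule tri_hull[OF m(1) m(2) m(3) _ _ _ _ e]) auto
    next
      case 3
      have n4: "pt 0 6 \<notin> split_set \<pi> \<pi>0" unfolding S using 3 by (elim disjE conjE; presburger)
      have n5: "pt 6 6 \<notin> split_set \<pi> \<pi>0" unfolding S using 3 by (elim disjE conjE; presburger)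
      have n6: "pt 10 10 \<notin> split_set \<pi> \<pi>0" unfolding S using 3 by (elim disjE conjE; presburger)
      have m: "pt 0 6 \<in> P - split_set \<pi> \<pi>0" "pt 6 6 \<in> P - split_set \<pi> \<pi>0" "pt 10 10 \<in> P - split_set \<pi> \<pi>0"
        using n4 n5 n6 pts by blast+
      have e: "vec2 1 (4/3) = (1/3) *\<^sub>R pt 0 6 + (1/6) *\<^sub>R pt 6 6 + (1/2) *\<^sub>R pt 10 10"
        unfolding vec2_comb by (simp add: vec2_eq)
      show ?thesis by (rule tri_hull[OF m(1) m(2) m(3) _ _ _ _ e]) auto
    qed
  qed
qed


lemma conv_half: "convex {y::real^'n. (\<Sum>i\<in>UNIV. c i * y$i) \<le> d}"
  unfolding convex_def
proof (clarify)
  fix x y :: "real^'n" and u v :: real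
  assume x: "(\<Sum>i\<in>UNIV. c i * x$i) \<le> d" and y: "(\<Sum>i\<in>UNIV. c i * y$i) \<le> d"
    and uv: "0 \<le> u" "0 \<le> v" "u + v = 1"
  have "(\<Sum>i\<in>UNIV. c i * (u *\<^sub>R x + v *\<^sub>R y)$i) = u * (\<Sum>i\<in>UNIV. c i * x$i) + v * (\<Sum>i\<in>UNIV. c i * y$i)"
    by (simp add: sum.distrib sum_distrib_left algebra_simps)
  also have "\<dots> \<le> u * d + v * d" using x y uv by (intro add_mono mult_left_mono) auto
  also have "\<dots> = (u + v) * d" by (simp add: algebra_simps)
  also have "\<dots> = d" using uv by simp
  finally show "(\<Sum>i\<in>UNIV. c i * (u *\<^sub>R x + v *\<^sub>R y)$i) \<le> d" .
qed

lemma hull_half: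
  assumes "\<And>z. z \<in> P_L \<Longrightarrow> z \<notin> split_set \<pi> \<pi>0 \<Longrightarrow> (\<Sum>i\<in>UNIV. c i * z$i) \<le> d"
    and "y \<in> split_closure P_L UNIV"
  shows "(\<Sum>i\<in>UNIV. c i * y$i) \<le> d"
proof -
  have "convex hull (P_L - split_set \<pi> \<pi>0) \<subseteq> {y. (\<Sum>i\<in>UNIV. c i * y$i) \<le> d}"
    by (rule hull_minimal) (use assms(1) in blast, rule conv_half)
  then show ?thesis using in_SC[OF assms(2)] by blast
qed

lemma part3: "vec2 1 (4/3) \<notin> proj_x ` split_closure P_L UNIV"
proof
  assume "vec2 1 (4/3) \<in> proj_x ` split_closure P_L UNIV"
  then obtain y where y: "y \<in> split_closure P_L UNIV" and e: "vec2 1 (4/3) = proj_x y" by blast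
  have y1: "y$1 = 1" using arg_cong[OF e, of "\<lambda>v. v$1"] by simp
  have y2: "y$2 = 4/3" using arg_cong[OF e, of "\<lambda>v. v$2"] by simp
  have I1: "(\<Sum>i\<in>UNIV. (\<lambda>i. if i = 2 then 1 else if i = 6 then -1 else 0) i * y$i) \<le> (1::real)"
  proof (rule hull_half[OF _ y, where \<pi>="\<chi> i. if i = 6 then 1 else 0" and \<pi>0=0])
    fix z assume "z \<in> P_L" "z \<notin> split_set (\<chi> i. if i = 6 then 1 else 0) 0"
    then show "(\<Sum>i\<in>UNIV. (\<lambda>i. if i = 2 then 1 else if i = 6 then -1 else 0) i * z$i) \<le> (1::real)"
      by (auto simp: P_L_def P_def split6 sum_6)
  qed
  have I2: "(\<Sum>i\<in>UNIV. (\<lambda>i. if i = 2 then 3 else if i = 4 then 4 else if i = 1 then -2 else 0) i * y$i) \<le> (3::real)"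
  proof (rule hull_half[OF _ y, where \<pi>="\<chi> i. if i = 4 then 1 else 0" and \<pi>0=0])
    fix z assume "z \<in> P_L" "z \<notin> split_set (\<chi> i. if i = 4 then 1 else 0) 0"
    then show "(\<Sum>i\<in>UNIV. (\<lambda>i. if i = 2 then 3 else if i = 4 then 4 else if i = 1 then -2 else 0) i * z$i) \<le> (3::real)"
      by (auto simp: P_L_def P_def split6 sum_6)
  qed
  have I3: "(\<Sum>i\<in>UNIV. (\<lambda>i. if i = 6 then 1 else if i = 4 then -1 else 0) i * y$i) \<le> (0::real)"
  proof (rule hull_half[OF _ y, where \<pi>="\<chi> i. if i = 4 then 1 else if i = 6 then -1 else 0" and \<pi>0="-1"])
    fix z assume "z \<in> P_L" "z \<notin> split_set (\<chi> i. if i = 4 then 1 else if i = 6 then -1 else 0) (-1)"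
    then show "(\<Sum>i\<in>UNIV. (\<lambda>i. if i = 6 then 1 else if i = 4 then -1 else 0) i * z$i) \<le> (0::real)"
      by (auto simp: P_L_def P_def split6 sum_6)
  qed
  show False using I1 I2 I3 y1 y2 by (simp add: sum_6)
qed

theorem theorem1:
  shows "proj_x ` split_closure P_L UNIV \<subset> split_closure P UNIV"
  using part1 part2 part3 by blast

end
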